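(* Let $\rho\in\mathbb R$, let $\mathbf a=(a_{m,n})$ be a complex matrix and let $\kappa_{\mathbf a}:\mathbb H_\rho\times\mathbb H_\rho\to\mathbb C$ be the Dirichlet series kernel with coefficient matrix $\mathbf a$. If $\kappa_{\mathbf a}$ is non-constant, then $\kappa_{\mathbf a}$ is not $\mathrm{Aut}_L(\mathbb H_\rho)$-invariant.
   Context: $\mathbb H_\rho=\{\Re s>\rho\}$. $\kappa_{\mathbf a}(s,u)=\sum_{m,n\ge1}a_{m,n}m^{-s}n^{-\bar u}$ is a Dirichlet series kernel on $\mathbb H_\rho$ if $(s,u)\mapsto\kappa_{\mathbf a}(s,\bar u)$ is regularly convergent on $\mathbb H_\rho\times\mathbb H_\rho$ (regular convergence of $\sum c_{m,n}m^{-s}n^{-u}$ at $(s_0,u_0)$: the double series converges there and all row series $\sum_m c_{m,n}m^{-s_0}$ and column series $\sum_n c_{m,n}n^{-u_0}$ converge). For $A=\begin{pmatrix}a&b\\0&d\end{pmatrix}\in\mathrm{SL}_2(\mathbb R)$ let $\phi_A(s)=\frac{a(s-\rho)-ib}{d}+\rho$; $\mathrm{Aut}_L(\mathbb H_\rho)$ is the group of all such $\phi_A$. For a group $G$ acting on a domain $\Omega$, a positive semi-definite kernel $\kappa$ on $\Omega$ is called $G$-invariant if $\kappa(g\cdot s,g\cdot u)=\kappa(s,u)$ for all $s,u\in\Omega$, $g\in G$. *)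

theory Defs
  imports "HOL-Analysis.Analysis"
begin

definition halfplane :: "real \<Rightarrow> complex set" where
  "halfplane \<rho> = {s. Re s > \<rho>}"

definition npow :: "nat \<Rightarrow> complex \<Rightarrow> complex" where
  "npow n s = (of_nat n :: complex) powr (- s)"

definition dd_partial :: "(nat \<Rightarrow> nat \<Rightarrow> complex) \<Rightarrow> complex \<Rightarrow> complex \<Rightarrow> nat \<times> nat \<Rightarrow> complex" where
  "dd_partial c s u = (\<lambda>(M, N). \<Sum>m\<in>{1..M}. \<Sum>n\<in>{1..N}. c m n * npow m s * npow n u)"

text \<open>Regular convergence at (s0,u0): the double series converges (Pringsheim sense),
  and every row series and every column series converges.\<close>
definition regularly_convergent_at ::
  "(nat \<Rightarrow> nat \<Rightarrow> complex) \<Rightarrow> complex \<Rightarrow> complex \<Rightarrow> bool" where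
  "regularly_convergent_at c s0 u0 \<longleftrightarrow>
     (\<exists>L. (dd_partial c s0 u0 \<longlongrightarrow> L) (sequentially \<times>\<^sub>F sequentially)) \<and>
     (\<forall>n\<ge>1. summable (\<lambda>m. c (Suc m) n * npow (Suc m) s0)) \<and>
     (\<forall>m\<ge>1. summable (\<lambda>n. c m (Suc n) * npow (Suc n) u0))"

text \<open>kappa_a is a Dirichlet series kernel on H_rho: (s,u) |-> kappa_a(s, conj u) is
  regularly convergent on H_rho x H_rho.\<close>
definition dirichlet_series_kernel :: "real \<Rightarrow> (nat \<Rightarrow> nat \<Rightarrow> complex) \<Rightarrow> bool" where
  "dirichlet_series_kernel \<rho> a \<longleftrightarrow>
     (\<forall>s\<in>halfplane \<rho>. \<forall>u\<in>halfplane \<rho>. regularly_convergent_at a s u)"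

definition kappa :: "(nat \<Rightarrow> nat \<Rightarrow> complex) \<Rightarrow> complex \<Rightarrow> complex \<Rightarrow> complex" where
  "kappa a s u = Lim (sequentially \<times>\<^sub>F sequentially) (dd_partial a s (cnj u))"

text \<open>phi_A for A = (a b; 0 d) in SL_2(R).\<close>
definition phiA :: "real \<Rightarrow> real \<Rightarrow> real \<Rightarrow> real \<Rightarrow> complex \<Rightarrow> complex" where
  "phiA \<rho> a b d s = (of_real a * (s - of_real \<rho>) - \<i> * of_real b) / of_real d + of_real \<rho>"

definition Aut_L :: "real \<Rightarrow> (complex \<Rightarrow> complex) set" where
  "Aut_L \<rho> = {phiA \<rho> a b d | a b d. a * d = 1}"

definition psd_kernel :: "'a set \<Rightarrow> ('a \<Rightarrow> 'a \<Rightarrow> complex) \<Rightarrow> bool" where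
  "psd_kernel \<Omega> k \<longleftrightarrow>
     (\<forall>(n::nat) (x::nat \<Rightarrow> 'a) (c::nat \<Rightarrow> complex). (\<forall>i<n. x i \<in> \<Omega>) \<longrightarrow>
        (let S = (\<Sum>i<n. \<Sum>j<n. cnj (c i) * c j * k (x i) (x j)) in Im S = 0 \<and> Re S \<ge> 0))"

definition invariant_kernel :: "('a \<Rightarrow> 'a) set \<Rightarrow> 'a set \<Rightarrow> ('a \<Rightarrow> 'a \<Rightarrow> complex) \<Rightarrow> bool" where
  "invariant_kernel G \<Omega> k \<longleftrightarrow> psd_kernel \<Omega> k \<and>
     (\<forall>g\<in>G. \<forall>s\<in>\<Omega>. \<forall>u\<in>\<Omega>. k (g s) (g u) = k s u)"

end

theory Submission
  imports Defs "HOL-Real_Asymp.Real_Asymp"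
begin

lemma norm_npow: "norm (npow m s) = real m powr (- Re s)"
  by (simp add: npow_def norm_powr_real_powr)

lemma npow_1 [simp]: "npow 1 s = 1"
  by (simp add: npow_def)

lemma npow_Suc0 [simp]: "npow (Suc 0) s = 1"
  by (simp add: npow_def)

lemma dd_partial_Suc:
  "dd_partial c s u (Suc M, Suc N) = dd_partial c s u (M, Suc N) + dd_partial c s u (Suc M, N)
     - dd_partial c s u (M, N) + c (Suc M) (Suc N) * npow (Suc M) s * npow (Suc N) u"
  by (simp add: dd_partial_def sum.distrib algebra_simps)

lemma norm4: "norm ((a::complex) - b - c + d) \<le> norm a + norm b + norm c + norm d"
proof -
  have "norm (a - b - c + d) \<le> norm (a - b - c) + norm d" by (rule norm_triangle_ineq)
  also have "norm (a - b - c) \<le> norm (a - b) + norm c" by (rule norm_triangle_ineq4)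
  also have "norm (a - b) \<le> norm a + norm b" by (rule norm_triangle_ineq4)
  finally show ?thesis by simp
qed

lemma reg_bounded:
  assumes "regularly_convergent_at c s0 u0"
  shows "\<exists>B. \<forall>m\<ge>1. \<forall>n\<ge>1. norm (c m n * npow m s0 * npow n u0) \<le> B"
proof -
  define t where "t m n = c m n * npow m s0 * npow n u0" for m n
  define S where "S = dd_partial c s0 u0"
  from assms obtain L where L: "(S \<longlongrightarrow> L) (sequentially \<times>\<^sub>F sequentially)"
    and col: "\<forall>n\<ge>1. summable (\<lambda>m. c (Suc m) n * npow (Suc m) s0)"
    and row: "\<forall>m\<ge>1. summable (\<lambda>n. c m (Suc n) * npow (Suc n) u0)"
    unfolding regularly_convergent_at_def S_def by blast
  have "eventually (\<lambda>p. dist (S p) L < 1) (sequentially \<times>\<^sub>F sequentially)"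
    using L tendstoD by force
  then obtain K where K: "\<And>m n. m \<ge> K \<Longrightarrow> n \<ge> K \<Longrightarrow> dist (S (n, m)) L < 1"
    unfolding eventually_prod_sequentially by blast
  have rb: "\<exists>b. m \<ge> 1 \<longrightarrow> (\<forall>n\<ge>1. norm (t m n) \<le> b)" for m
  proof (cases "m \<ge> 1")
    case True
    then have "Bseq (\<lambda>n. c m (Suc n) * npow (Suc n) u0)" using row summable_imp_Bseq by blast
    then obtain b where b: "\<And>n. norm (c m (Suc n) * npow (Suc n) u0) \<le> b"
      unfolding Bseq_def by (meson less_imp_le)
    have "norm (t m n) \<le> norm (npow m s0) * b" if "n \<ge> 1" for n
    proof -
      obtain k where k: "n = Suc k" using \<open>n \<ge> 1\<close> by (cases n) auto
      have "norm (t m n) = norm (npow m s0) * norm (c m (Suc k) * npow (Suc k) u0)"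
        unfolding t_def k by (simp add: norm_mult)
      also have "\<dots> \<le> norm (npow m s0) * b" by (intro mult_left_mono b) simp
      finally show ?thesis .
    qed
    then show ?thesis by blast
  qed auto
  have cb: "\<exists>b. n \<ge> 1 \<longrightarrow> (\<forall>m\<ge>1. norm (t m n) \<le> b)" for n
  proof (cases "n \<ge> 1")
    case True
    then have "Bseq (\<lambda>m. c (Suc m) n * npow (Suc m) s0)" using col summable_imp_Bseq by blast
    then obtain b where b: "\<And>m. norm (c (Suc m) n * npow (Suc m) s0) \<le> b"
      unfolding Bseq_def by (meson less_imp_le)
    have "norm (t m n) \<le> b * norm (npow n u0)" if "m \<ge> 1" for m
    proof -
      obtain k where k: "m = Suc k" using \<open>m \<ge> 1\<close> by (cases m) auto
      have "norm (t m n) = norm (c (Suc k) n * npow (Suc k) s0) * norm (npow n u0)"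
        unfolding t_def k by (simp add: norm_mult)
      also have "\<dots> \<le> b * norm (npow n u0)" by (intro mult_right_mono b) simp
      finally show ?thesis .
    qed
    then show ?thesis by blast
  qed auto
  obtain br where br: "\<And>m. m \<ge> 1 \<Longrightarrow> \<forall>n\<ge>1. norm (t m n) \<le> br m"
    using rb by metis
  obtain bc where bc: "\<And>n. n \<ge> 1 \<Longrightarrow> \<forall>m\<ge>1. norm (t m n) \<le> bc n"
    using cb by metis
  define B where "B = 4 + (\<Sum>m\<le>K. \<bar>br m\<bar>) + (\<Sum>n\<le>K. \<bar>bc n\<bar>)"
  have s1: "(\<Sum>m\<le>K. \<bar>br m\<bar>) \<ge> 0" "(\<Sum>n\<le>K. \<bar>bc n\<bar>) \<ge> 0"
    by (auto intro: sum_nonneg)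
  have "norm (t m n) \<le> B" if "m \<ge> 1" "n \<ge> 1" for m n
  proof (cases "m \<le> K")
    case True
    have "norm (t m n) \<le> br m" using br that by blast
    also have "\<dots> \<le> \<bar>br m\<bar>" by simp
    also have "\<dots> \<le> (\<Sum>m\<le>K. \<bar>br m\<bar>)"
      using True by (intro member_le_sum) auto
    finally show ?thesis unfolding B_def using s1 by linarith
  next
    case mK: False
    show ?thesis
    proof (cases "n \<le> K")
      case True
      have "norm (t m n) \<le> bc n" using bc that by blast
      also have "\<dots> \<le> \<bar>bc n\<bar>" by simp
      also have "\<dots> \<le> (\<Sum>n\<le>K. \<bar>bc n\<bar>)"
        using True by (intro member_le_sum) auto
      finally show ?thesis unfolding B_def using s1 by linarith
    next
      case False
      obtain m' n' where mn: "m = Suc m'" "n = Suc n'" "m' \<ge> K" "n' \<ge> K"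
        using mK False by (cases m; cases n) auto
      have e: "t m n = (S (Suc m', Suc n') - L) - (S (m', Suc n') - L) - (S (Suc m', n') - L)
                 + (S (m', n') - L)"
        unfolding S_def t_def mn dd_partial_Suc by (simp add: algebra_simps)
      have d1: "norm (S (Suc m', Suc n') - L) < 1" "norm (S (m', Suc n') - L) < 1"
        "norm (S (Suc m', n') - L) < 1" "norm (S (m', n') - L) < 1"
        using K[of "Suc n'" "Suc m'"] K[of "Suc n'" m'] K[of n' "Suc m'"] K[of n' m'] mn
        by (auto simp: dist_norm)
      have "norm (t m n) \<le> norm (S (Suc m', Suc n') - L) + norm (S (m', Suc n') - L)
          + norm (S (Suc m', n') - L) + norm (S (m', n') - L)"
        unfolding e by (rule norm4)
      then show ?thesis unfolding B_def using s1 d1 by linarith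
    qed
  qed
  then show ?thesis unfolding t_def by blast
qed

lemma psum:
  fixes x :: real
  assumes x: "x \<ge> 2" and M: "M \<ge> 1"
  shows "(\<Sum>m\<in>{1..M}. real m powr (-x)) \<le> 1 + 2 powr (2 - x) * (1 - 1 / real M)"
  using M
proof (induction M rule: dec_induct)
  case base
  then show ?case by simp
next
  case (step M)
  have M0: "real M \<ge> 1" using step by simp
  have "real (Suc M) powr (-x) = real (Suc M) powr (2 - x) * real (Suc M) powr (-2)"
    by (simp add: powr_add[symmetric])
  also have "\<dots> \<le> 2 powr (2 - x) * real (Suc M) powr (-2)"
    using x step by (intro mult_right_mono powr_mono2') auto
  also have "real (Suc M) powr (-2) = 1 / (real M + 1)^2"
    by (simp add: powr_minus powr_realpow divide_inverse)
  also have "1 / (real M + 1)^2 \<le> 1 / (real M * (real M + 1))"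
    using M0 by (intro divide_left_mono) (auto simp: power2_eq_square intro!: mult_right_mono)
  also have "\<dots> = 1 / real M - 1 / (real M + 1)"
    using M0 by (simp add: field_simps)
  finally have "real (Suc M) powr (-x) \<le> 2 powr (2 - x) * (1 / real M - 1 / (real M + 1))"
    by (simp add: mult_left_mono)
  then show ?case using step by (simp add: algebra_simps)
qed

lemma psum': 
  fixes x :: real
  assumes x: "x \<ge> 2"
  shows "(\<Sum>m\<in>{1..M}. real m powr (-x)) \<le> 1 + 2 powr (2 - x)"
proof (cases "M \<ge> 1")
  case True
  have "2 powr (2 - x) * (1 - 1 / real M) \<le> 2 powr (2 - x)"
    using True by (intro mult_left_le) auto
  then show ?thesis using psum[OF x True] by linarith
qed auto

lemma sum_prod_helper:
  "(\<Sum>m\<in>A. \<Sum>n\<in>C. (B::real) * (f m * g n)) = B * ((\<Sum>m\<in>A. f m) * (\<Sum>n\<in>C. g n))"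
  by (simp add: sum_distrib_left sum_distrib_right mult_ac) (rule sum.swap)

lemma est:
  assumes reg: "(dd_partial a s v \<longlongrightarrow> L) (sequentially \<times>\<^sub>F sequentially)"
    and B: "\<And>m n. m \<ge> 1 \<Longrightarrow> n \<ge> 1 \<Longrightarrow> norm (a m n) * real m powr (-r) * real n powr (-r) \<le> B"
    and x: "Re s - r \<ge> 2" and y: "Re v - r \<ge> 2"
  shows "norm (L - a 1 1) \<le> B * (2 powr (2 - (Re s - r)) + 2 powr (2 - (Re v - r))
            + 2 powr (2 - (Re s - r)) * 2 powr (2 - (Re v - r)))"
proof -
  define x where "x = Re s - r"
  define y where "y = Re v - r"
  define ex where "ex = 2 powr (2 - x)"
  define ey where "ey = 2 powr (2 - y)"
  have "norm (a 1 1) \<le> B" using B[of 1 1] by simp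
  hence B0: "B \<ge> 0" by (rule order_trans[OF norm_ge_zero])
  define f where "f = (\<lambda>(m,n). a m n * npow m s * npow n v)"
  define w where "w = (\<lambda>(m::nat,n::nat). B * (real m powr (-x) * real n powr (-y)))"
  have fw: "norm (f p) \<le> w p" if pP: "p \<in> {1..M} \<times> {1..N}" for p M N
  proof -
    obtain m n where p: "p = (m,n)" "m \<ge> 1" "n \<ge> 1" using pP by force
    have "norm (f p) = (norm (a m n) * real m powr (-r) * real n powr (-r)) * (real m powr (-x) * real n powr (-y))"
    proof -
      have pw1: "real m powr (- Re s) = real m powr (-r) * real m powr (-x)"
        unfolding x_def by (simp add: powr_add[symmetric])
      have pw2: "real n powr (- Re v) = real n powr (-r) * real n powr (-y)"
        unfolding y_def by (simp add: powr_add[symmetric])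
      show ?thesis unfolding p f_def by (simp add: norm_mult norm_npow pw1 pw2 mult_ac)
    qed
    also have "\<dots> \<le> w p" unfolding w_def p prod.case by (intro mult_right_mono B p) auto
    finally show ?thesis .
  qed
  have part: "norm (dd_partial a s v (M,N) - a 1 1) \<le> B * (ex + ey + ex * ey)" if "M \<ge> 1" "N \<ge> 1" for M N
  proof -
    let ?P = "{1..M} \<times> {1..N}"
    have inP: "(1,1) \<in> ?P" using that by auto
    have "dd_partial a s v (M,N) = sum f ?P"
      unfolding dd_partial_def f_def by (simp add: sum.cartesian_product)
    also have "\<dots> = f (1,1) + sum f (?P - {(1,1)})" using inP by (simp add: sum.remove)
    finally have "dd_partial a s v (M,N) - a 1 1 = sum f (?P - {(1,1)})" by (simp add: f_def)
    hence "norm (dd_partial a s v (M,N) - a 1 1) \<le> sum (\<lambda>p. norm (f p)) (?P - {(1,1)})"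
      by (simp add: norm_sum)
    also have "\<dots> \<le> sum w (?P - {(1,1)})" by (intro sum_mono fw) auto
    also have "\<dots> = sum w ?P - w (1,1)" using inP by (simp add: sum_diff1)
    also have "sum w ?P = (\<Sum>m\<in>{1..M}. \<Sum>n\<in>{1..N}. B * (real m powr (-x) * real n powr (-y)))"
      unfolding w_def by (rule sum.cartesian_product[symmetric])
    also have "\<dots> = B * ((\<Sum>m\<in>{1..M}. real m powr (-x)) * (\<Sum>n\<in>{1..N}. real n powr (-y)))"
      by (rule sum_prod_helper)
    also have "\<dots> \<le> B * ((1 + ex) * (1 + ey))"
      using psum'[of x M] psum'[of y N] x y B0 unfolding x_def y_def ex_def ey_def
      by (intro mult_left_mono mult_mono) (auto intro: sum_nonneg)
    finally show ?thesis by (simp add: w_def algebra_simps)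
  qed
  have "eventually (\<lambda>p. norm (dd_partial a s v p - a 1 1) \<le> B * (ex + ey + ex * ey)) (sequentially \<times>\<^sub>F sequentially)"
    unfolding eventually_prod_sequentially using part by (intro exI[of _ 1]) auto
  moreover have "((\<lambda>p. norm (dd_partial a s v p - a 1 1)) \<longlongrightarrow> norm (L - a 1 1)) (sequentially \<times>\<^sub>F sequentially)"
    by (intro tendsto_intros reg)
  ultimately have "norm (L - a 1 1) \<le> B * (ex + ey + ex * ey)"
    by (intro tendsto_upperbound) (auto simp: prod_filter_eq_bot)
  then show ?thesis unfolding ex_def ey_def x_def y_def .
qed

theorem corollary4p6:
  fixes \<rho> :: real and a :: "nat \<Rightarrow> nat \<Rightarrow> complex"
  assumes "dirichlet_series_kernel \<rho> a"
    and "\<exists>s1\<in>halfplane \<rho>. \<exists>u1\<in>halfplane \<rho>. \<exists>s2\<in>halfplane \<rho>. \<exists>u2\<in>halfplane \<rho>.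
           kappa a s1 u1 \<noteq> kappa a s2 u2"
  shows "\<not> invariant_kernel (Aut_L \<rho>) (halfplane \<rho>) (kappa a)"
proof
  assume inv: "invariant_kernel (Aut_L \<rho>) (halfplane \<rho>) (kappa a)"
  have Aut: "\<And>g s u. g \<in> Aut_L \<rho> \<Longrightarrow> s \<in> halfplane \<rho> \<Longrightarrow> u \<in> halfplane \<rho> \<Longrightarrow>
      kappa a (g s) (g u) = kappa a s u"
    using inv unfolding invariant_kernel_def by blast
  have reg: "\<And>s u. s \<in> halfplane \<rho> \<Longrightarrow> u \<in> halfplane \<rho> \<Longrightarrow> regularly_convergent_at a s u"
    using assms(1) unfolding dirichlet_series_kernel_def by blast
  define r where "r = \<rho> + 1"
  have s0H: "complex_of_real r \<in> halfplane \<rho>" unfolding r_def halfplane_def by simp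
  obtain B0 where B0: "\<And>m n. m \<ge> 1 \<Longrightarrow> n \<ge> 1 \<Longrightarrow>
      norm (a m n * npow m (complex_of_real r) * npow n (complex_of_real r)) \<le> B0"
    using reg_bounded[OF reg[OF s0H s0H]] by blast
  have Bb: "norm (a m n) * real m powr (-r) * real n powr (-r) \<le> B0" if "m \<ge> 1" "n \<ge> 1" for m n
    using B0[OF that] by (simp add: norm_mult norm_npow)
  have const: "kappa a s u = a 1 1" if sH: "s \<in> halfplane \<rho>" and uH: "u \<in> halfplane \<rho>" for s u
  proof -
    define \<alpha> where "\<alpha> = Re s - \<rho>"
    define \<beta> where "\<beta> = Re u - \<rho>"
    have \<alpha>: "\<alpha> > 0" and \<beta>: "\<beta> > 0" using sH uH unfolding \<alpha>_def \<beta>_def halfplane_def by auto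
    define E where "E t = B0 * (2 powr (3 - t*t*\<alpha>) + 2 powr (3 - t*t*\<beta>)
        + 2 powr (3 - t*t*\<alpha>) * 2 powr (3 - t*t*\<beta>))" for t :: real
    define g where "g t = phiA \<rho> t 0 (1/t)" for t
    have geq: "g t z = complex_of_real (t*t) * (z - complex_of_real \<rho>) + complex_of_real \<rho>"
      if "t > 0" for t z
      using that unfolding g_def phiA_def by (simp add: field_simps)
    have gA: "g t \<in> Aut_L \<rho>" if "t > 0" for t
      unfolding Aut_L_def g_def using that by (intro CollectI exI[of _ t] exI[of _ 0] exI[of _ "1/t"]) simp
    have key: "norm (kappa a s u - a 1 1) \<le> E t" if t: "t > 0" "t*t*\<alpha> \<ge> 3" "t*t*\<beta> \<ge> 3" for t
    proof -
      define s' where "s' = g t s"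
      define u' where "u' = g t u"
      have Res': "Re s' = t*t*\<alpha> + \<rho>" unfolding s'_def geq[OF t(1)] \<alpha>_def by simp
      have Reu': "Re (cnj u') = t*t*\<beta> + \<rho>" unfolding u'_def geq[OF t(1)] \<beta>_def by simp
      have pos: "t*t > 0" using t by simp
      have s'H: "s' \<in> halfplane \<rho>" using Res' \<alpha> pos unfolding halfplane_def by simp
      have u'H: "cnj u' \<in> halfplane \<rho>" using Reu' \<beta> pos unfolding halfplane_def by simp
      have "kappa a s u = kappa a s' u'"
        unfolding s'_def u'_def using Aut[OF gA[OF t(1)] sH uH] by simp
      also have "\<dots> = Lim (sequentially \<times>\<^sub>F sequentially) (dd_partial a s' (cnj u'))"
        unfolding kappa_def ..
      finally have kk: "kappa a s u = Lim (sequentially \<times>\<^sub>F sequentially) (dd_partial a s' (cnj u'))" .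
      obtain L where L: "(dd_partial a s' (cnj u') \<longlongrightarrow> L) (sequentially \<times>\<^sub>F sequentially)"
        using reg[OF s'H u'H] unfolding regularly_convergent_at_def by blast
      have "Lim (sequentially \<times>\<^sub>F sequentially) (dd_partial a s' (cnj u')) = L"
        using L by (intro tendsto_Lim) (auto simp: prod_filter_eq_bot)
      with kk have kL: "kappa a s u = L" by simp
      have e1: "Re s' - r = t*t*\<alpha> - 1" and e2: "Re (cnj u') - r = t*t*\<beta> - 1"
        using Res' Reu' unfolding r_def by simp_all
      have "norm (L - a 1 1) \<le> B0 * (2 powr (2 - (Re s' - r)) + 2 powr (2 - (Re (cnj u') - r))
            + 2 powr (2 - (Re s' - r)) * 2 powr (2 - (Re (cnj u') - r)))"
        using t e2 by (intro est[OF L Bb]) (auto simp: e1)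
      also have "\<dots> = E t" unfolding E_def e1 e2 by (simp add: algebra_simps)
      finally show ?thesis using kL by simp
    qed
    have ev: "eventually (\<lambda>t. norm (kappa a s u - a 1 1) \<le> E t) at_top"
    proof -
      have "eventually (\<lambda>t::real. t > 0) at_top" by real_asymp
      moreover have "eventually (\<lambda>t. t*t*\<alpha> \<ge> 3) at_top" using \<alpha> by real_asymp
      moreover have "eventually (\<lambda>t. t*t*\<beta> \<ge> 3) at_top" using \<beta> by real_asymp
      ultimately have "eventually (\<lambda>t. t > 0 \<and> t*t*\<alpha> \<ge> 3 \<and> t*t*\<beta> \<ge> 3) at_top"
        by eventually_elim blast
      then show ?thesis by eventually_elim (use key in blast)
    qed
    have l1: "((\<lambda>t. 2 powr (3 - t*t*\<alpha>)) \<longlongrightarrow> 0) at_top" using \<alpha> by real_asymp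
    have l2: "((\<lambda>t. 2 powr (3 - t*t*\<beta>)) \<longlongrightarrow> 0) at_top" using \<beta> by real_asymp
    have "(E \<longlongrightarrow> B0 * (0 + 0 + 0 * 0)) at_top"
      unfolding E_def by (intro tendsto_intros l1 l2)
    hence "(E \<longlongrightarrow> 0) at_top" by simp
    hence "norm (kappa a s u - a 1 1) \<le> 0"
      using ev by (intro tendsto_le[OF _ _ tendsto_const]) auto
    then show ?thesis by simp
  qed
  from assms(2) obtain s1 u1 s2 u2 where "s1 \<in> halfplane \<rho>" "u1 \<in> halfplane \<rho>"
    "s2 \<in> halfplane \<rho>" "u2 \<in> halfplane \<rho>" "kappa a s1 u1 \<noteq> kappa a s2 u2" by blast
  then show False using const by metis
qed

end
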